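(* Let $r\ge 2$, $\alpha=2^r-1$, $\beta=2^{r-1}(2^r-1)$, let $\mathcal{C}\subseteq\mathbb{Z}_2^\alpha\times\mathbb{Z}_4^\beta$ be a $\mathbb{Z}_2\mathbb{Z}_4$-additive 1-perfect code and $D=\mathcal{C}^\perp$, and assume $D$ is $\mathbb{Z}_2\mathbb{Z}_4$-cyclic. Let $\mathbf{z}=(x\mid y)\in D$ with $x\in\mathbb{Z}_2^\alpha$, $y\in\mathbb{Z}_4^\beta$, be a codeword of order 4 (i.e. $2\mathbf{z}\neq 0$). Then $y$ has exactly $2^{2r-2}$ coordinates in $\{1,3\}$, exactly $2^{r-2}(2^{r-1}-1)$ coordinates equal to $2$, and exactly $2^{r-2}(2^{r-1}-1)$ coordinates equal to $0$.
   Context: A $\mathbb{Z}_2\mathbb{Z}_4$-additive code is an additive subgroup of $\mathbb{Z}_2^\alpha\times\mathbb{Z}_4^\beta$; vectors are $(u\mid u')$ with $u\in\mathbb{Z}_2^\alpha$, $u'\in\mathbb{Z}_4^\beta$. The Gray map $\phi:\mathbb{Z}_4\to\mathbb{Z}_2^2$ is $0\mapsto(0,0),1\mapsto(0,1),2\mapsto(1,1),3\mapsto(1,0)$, $\Phi(u\mid u')=(u\mid\phi(u'_1),\dots,\phi(u'_\beta))$. A binary code $C\subseteq\mathbb{Z}_2^n$ is 1-perfect if the Hamming balls of radius 1 around its codewords partition $\mathbb{Z}_2^n$; a $\mathbb{Z}_2\mathbb{Z}_4$-additive code is 1-perfect if its Gray image is. The dual is $\mathcal{C}^\perp=\{\mathbf{v}:\mathbf{u}\cdot\mathbf{v}=0\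 \forall\mathbf{u}\in\mathcal{C}\}$ with $\mathbf{u}\cdot\mathbf{v}=2\sum_{i=1}^\alpha u_iv_i+\sum_{j=1}^\beta u'_jv'_j\in\mathbb{Z}_4$. With $\sigma(v_1,\dots,v_m)=(v_m,v_1,\dots,v_{m-1})$ and $\sigma(u\mid u')=(\sigma(u)\mid\sigma(u'))$, a code is $\mathbb{Z}_2\mathbb{Z}_4$-cyclic if closed under $\sigma$. *)

theory Defs
  imports Main
begin

definition Z2vecs :: "nat \<Rightarrow> int list set" where
  "Z2vecs n = {u. length u = n \<and> set u \<subseteq> {0,1}}"

definition Z4vecs :: "nat \<Rightarrow> int list set" where
  "Z4vecs n = {u. length u = n \<and> set u \<subseteq> {0,1,2,3}}"

definition Z2Z4space :: "nat \<Rightarrow> nat \<Rightarrow> (int list \<times> int list) set" where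
  "Z2Z4space a b = Z2vecs a \<times> Z4vecs b"

definition z24_zero :: "nat \<Rightarrow> nat \<Rightarrow> int list \<times> int list" where
  "z24_zero a b = (replicate a 0, replicate b 0)"

definition z24_add :: "int list \<times> int list \<Rightarrow> int list \<times> int list \<Rightarrow> int list \<times> int list" where
  "z24_add v w = (map2 (\<lambda>x y. (x + y) mod 2) (fst v) (fst w),
                  map2 (\<lambda>x y. (x + y) mod 4) (snd v) (snd w))"

definition z24_neg :: "int list \<times> int list \<Rightarrow> int list \<times> int list" where
  "z24_neg v = (map (\<lambda>x. (- x) mod 2) (fst v), map (\<lambda>x. (- x) mod 4) (snd v))"

definition Z2Z4_additive :: "nat \<Rightarrow> nat \<Rightarrow> (int list \<times> int list) set \<Rightarrow> bool" where
  "Z2Z4_additive a b C \<longleftrightarrow> C \<subseteq> Z2Z4space a b \<and> z24_zero a b \<in> C \<and>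
     (\<forall>v\<in>C. \<forall>w\<in>C. z24_add v w \<in> C) \<and> (\<forall>v\<in>C. z24_neg v \<in> C)"

definition z24_inner :: "int list \<times> int list \<Rightarrow> int list \<times> int list \<Rightarrow> int" where
  "z24_inner v w = (2 * (\<Sum>i<length (fst v). fst v ! i * fst w ! i)
                    + (\<Sum>j<length (snd v). snd v ! j * snd w ! j)) mod 4"

definition Z2Z4_dual :: "nat \<Rightarrow> nat \<Rightarrow> (int list \<times> int list) set \<Rightarrow> (int list \<times> int list) set" where
  "Z2Z4_dual a b C = {v \<in> Z2Z4space a b. \<forall>u\<in>C. z24_inner u v = 0}"

definition gray :: "int \<Rightarrow> int list" where
  "gray x = (if x = 0 then [0,0] else if x = 1 then [0,1] else if x = 2 then [1,1] else [1,0])"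

definition Gray :: "int list \<times> int list \<Rightarrow> int list" where
  "Gray v = fst v @ concat (map gray (snd v))"

definition hamming :: "int list \<Rightarrow> int list \<Rightarrow> nat" where
  "hamming x y = card {i. i < length x \<and> x ! i \<noteq> y ! i}"

definition perfect1 :: "nat \<Rightarrow> int list set \<Rightarrow> bool" where
  "perfect1 n B \<longleftrightarrow> B \<subseteq> Z2vecs n \<and> (\<forall>x\<in>Z2vecs n. \<exists>!c. c \<in> B \<and> hamming x c \<le> 1)"

definition Z2Z4_perfect1 :: "nat \<Rightarrow> nat \<Rightarrow> (int list \<times> int list) set \<Rightarrow> bool" where
  "Z2Z4_perfect1 a b C \<longleftrightarrow> perfect1 (a + 2 * b) (Gray ` C)"

definition shiftr :: "int list \<Rightarrow> int list" where
  "shiftr xs = (if xs = [] then [] else last xs # butlast xs)"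

definition Z2Z4_cyclic :: "(int list \<times> int list) set \<Rightarrow> bool" where
  "Z2Z4_cyclic C \<longleftrightarrow> (\<forall>v\<in>C. (shiftr (fst v), shiftr (snd v)) \<in> C)"

end

theory Submission
  imports Defs Complex_Main
begin


lemma memA:
  "v \<in> Z2Z4space a b \<longleftrightarrow> length (fst v) = a \<and> (\<forall>i<a. fst v ! i \<in> {0,1})
      \<and> length (snd v) = b \<and> (\<forall>j<b. snd v ! j \<in> {0,1,2,3})"
  unfolding Z2Z4space_def Z2vecs_def Z4vecs_def
  by (cases v) (auto simp: set_conv_nth)

locale sp = fixes a b :: nat
begin
abbreviation "A \<equiv> Z2Z4space a b"
end

lemma add_fst: "fst (z24_add v w) = map2 (\<lambda>x y. (x + y) mod 2) (fst v) (fst w)"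
  by (simp add: z24_add_def)
lemma add_snd: "snd (z24_add v w) = map2 (\<lambda>x y. (x + y) mod 4) (snd v) (snd w)"
  by (simp add: z24_add_def)
lemma neg_fst: "fst (z24_neg v) = map (\<lambda>x. (- x) mod 2) (fst v)"
  by (simp add: z24_neg_def)
lemma neg_snd: "snd (z24_neg v) = map (\<lambda>x. (- x) mod 4) (snd v)"
  by (simp add: z24_neg_def)

lemma add_A: "v \<in> Z2Z4space a b \<Longrightarrow> w \<in> Z2Z4space a b \<Longrightarrow> z24_add v w \<in> Z2Z4space a b"
  unfolding memA by (auto simp: add_fst add_snd)

lemma neg_A: "v \<in> Z2Z4space a b \<Longrightarrow> z24_neg v \<in> Z2Z4space a b"
  unfolding memA by (auto simp: neg_fst neg_snd)

lemma eqA: "v \<in> Z2Z4space a b \<Longrightarrow> w \<in> Z2Z4space a b \<Longrightarrow>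
   v = w \<longleftrightarrow> (\<forall>i<a. fst v ! i = fst w ! i) \<and> (\<forall>j<b. snd v ! j = snd w ! j)"
  unfolding memA by (cases v; cases w) (auto simp: list_eq_iff_nth_eq)

context sp begin

lemma nth_add1: "v \<in> Z2Z4space a b \<Longrightarrow> w \<in> Z2Z4space a b \<Longrightarrow> i < a \<Longrightarrow>
   fst (z24_add v w) ! i = (fst v ! i + fst w ! i) mod 2"
  unfolding memA by (auto simp: add_fst)
lemma nth_add2: "v \<in> Z2Z4space a b \<Longrightarrow> w \<in> Z2Z4space a b \<Longrightarrow> j < b \<Longrightarrow>
   snd (z24_add v w) ! j = (snd v ! j + snd w ! j) mod 4"
  unfolding memA by (auto simp: add_snd)
lemma nth_neg1: "v \<in> Z2Z4space a b \<Longrightarrow> i < a \<Longrightarrow> fst (z24_neg v) ! i = (- fst v ! i) mod 2"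
  unfolding memA by (auto simp: neg_fst)
lemma nth_neg2: "v \<in> Z2Z4space a b \<Longrightarrow> j < b \<Longrightarrow> snd (z24_neg v) ! j = (- snd v ! j) mod 4"
  unfolding memA by (auto simp: neg_snd)

lemma rng1: "v \<in> Z2Z4space a b \<Longrightarrow> i < a \<Longrightarrow> fst v ! i = 0 \<or> fst v ! i = 1"
  unfolding memA by auto
lemma rng2: "v \<in> Z2Z4space a b \<Longrightarrow> j < b \<Longrightarrow> snd v ! j = 0 \<or> snd v ! j = 1 \<or> snd v ! j = 2 \<or> snd v ! j = 3"
  unfolding memA by auto

lemma zero_A: "z24_zero a b \<in> Z2Z4space a b"
  unfolding memA z24_zero_def by auto

definition sub where "sub v w = z24_add v (z24_neg w)"

lemma sub_A: "v \<in> Z2Z4space a b \<Longrightarrow> w \<in> Z2Z4space a b \<Longrightarrow> sub v w \<in> Z2Z4space a b"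
  unfolding sub_def by (intro add_A neg_A)

lemmas nths = nth_add1 nth_add2 nth_neg1 nth_neg2 sub_def add_A neg_A

lemma add_sub_cancel: assumes "c \<in> Z2Z4space a b" "v \<in> Z2Z4space a b"
  shows "z24_add c (sub v c) = v"
proof -
  have "(\<forall>i<a. fst (z24_add c (sub v c)) ! i = fst v ! i) \<and> (\<forall>j<b. snd (z24_add c (sub v c)) ! j = snd v ! j)"
  proof (intro conjI allI impI)
    fix i assume i: "i < a"
    show "fst (z24_add c (sub v c)) ! i = fst v ! i"
      using rng1[OF assms(1) i] rng1[OF assms(2) i] i assms by (auto simp: nths)
  next
    fix j assume j: "j < b"
    show "snd (z24_add c (sub v c)) ! j = snd v ! j"
      using rng2[OF assms(1) j] rng2[OF assms(2) j] j assms by (auto simp: nths)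
  qed
  then show ?thesis using assms by (subst eqA) (auto intro: add_A sub_A)
qed

lemma add_sub_cancel2: assumes "c \<in> Z2Z4space a b" "e \<in> Z2Z4space a b"
  shows "sub (z24_add c e) c = e"
proof -
  have "(\<forall>i<a. fst (sub (z24_add c e) c) ! i = fst e ! i) \<and> (\<forall>j<b. snd (sub (z24_add c e) c) ! j = snd e ! j)"
  proof (intro conjI allI impI)
    fix i assume i: "i < a"
    show "fst (sub (z24_add c e) c) ! i = fst e ! i"
      using rng1[OF assms(1) i] rng1[OF assms(2) i] i assms add_A[OF assms] by (auto simp: nths)
  next
    fix j assume j: "j < b"
    show "snd (sub (z24_add c e) c) ! j = snd e ! j"
      using rng2[OF assms(1) j] rng2[OF assms(2) j] j assms add_A[OF assms] by (auto simp: nths)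
  qed
  then show ?thesis using assms by (subst eqA) (auto intro: add_A sub_A)
qed

end


fun hl :: "int list \<Rightarrow> int list \<Rightarrow> nat" where
  "hl (x#xs) (y#ys) = (if x = y then 0 else 1) + hl xs ys"
| "hl _ _ = 0"

lemma hl_card: "length x = length y \<Longrightarrow> hl x y = card {i. i < length x \<and> x ! i \<noteq> y ! i}"
proof (induction x arbitrary: y)
  case Nil then show ?case by simp
next
  case (Cons u xs)
  then obtain v ys where y: "y = v # ys" and l: "length xs = length ys" by (cases y) auto
  have "{i. i < length (u#xs) \<and> (u#xs) ! i \<noteq> (v#ys) ! i}
      = (if u = v then {} else {0}) \<union> Suc ` {i. i < length xs \<and> xs ! i \<noteq> ys ! i}"
  proof (intro set_eqI iffI)
    fix i assume "i \<in> {i. i < length (u#xs) \<and> (u#xs) ! i \<noteq> (v#ys) ! i}"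
    then show "i \<in> (if u = v then {} else {0}) \<union> Suc ` {i. i < length xs \<and> xs ! i \<noteq> ys ! i}"
      by (cases i) auto
  next
    fix i assume "i \<in> (if u = v then {} else {0}) \<union> Suc ` {i. i < length xs \<and> xs ! i \<noteq> ys ! i}"
    then show "i \<in> {i. i < length (u#xs) \<and> (u#xs) ! i \<noteq> (v#ys) ! i}"
      by (auto split: if_splits)
  qed
  then show ?case using Cons.IH[OF l] y
    by (auto simp: card_image)
qed

lemma hl_append: "length p = length q \<Longrightarrow> hl (p @ s) (q @ t) = hl p q + hl s t"
proof (induction p arbitrary: q)
  case Nil then show ?case by simp
next
  case (Cons u xs) then show ?case by (cases q) auto
qed

lemma len_gray: "length (gray k) = 2" by (simp add: gray_def)

lemma len_concat_gray: "length (concat (map gray u)) = 2 * length u"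
  by (induction u) (auto simp: len_gray)

lemma hl_concat: "length u = length w \<Longrightarrow>
  hl (concat (map gray u)) (concat (map gray w)) = (\<Sum>j<length u. hl (gray (u!j)) (gray (w!j)))"
proof (induction u arbitrary: w)
  case Nil then show ?case by simp
next
  case (Cons p us)
  then obtain q ws where w: "w = q # ws" and l: "length us = length ws" by (cases w) auto
  have "hl (concat (map gray (p#us))) (concat (map gray w)) = hl (gray p) (gray q) + hl (concat (map gray us)) (concat (map gray ws))"
    using w by (simp add: hl_append len_gray del: hl.simps)
  also have "\<dots> = (\<Sum>j<Suc (length us). hl (gray ((p#us)!j)) (gray (w!j)))"
    using Cons.IH[OF l] w by (subst sum.lessThan_Suc_shift) simp
  finally show ?case by simp
qed

definition lee :: "int \<Rightarrow> nat" where
  "lee k = (if k = 0 then 0 else if k = 2 then 2 else 1)"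

lemma hl_gray: "p \<in> {0,1,2,3} \<Longrightarrow> q \<in> {0,1,2,3} \<Longrightarrow> hl (gray p) (gray q) = lee ((p + (-q) mod 4) mod 4)"
  by (elim insertE; simp add: gray_def lee_def)

context sp begin

definition W :: "int list \<times> int list \<Rightarrow> nat" where
  "W d = card {i. i < a \<and> fst d ! i \<noteq> 0} + (\<Sum>j<b. lee (snd d ! j))"

lemma Gray_len: "v \<in> A \<Longrightarrow> length (Gray v) = a + 2 * b"
  unfolding memA Gray_def by (simp add: len_concat_gray)

lemma Gray_vecs: "v \<in> A \<Longrightarrow> Gray v \<in> Z2vecs (a + 2*b)"
  unfolding Z2vecs_def using Gray_len[of v] unfolding Z2Z4space_def Z2vecs_def Gray_def
  by (auto simp: gray_def)

lemma ham_W: assumes v: "v \<in> A" and c: "c \<in> A"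
  shows "hamming (Gray v) (Gray c) = W (sub v c)"
proof -
  have l: "length (fst v) = a" "length (fst c) = a" "length (snd v) = b" "length (snd c) = b"
    using v c unfolding memA by auto
  have "hamming (Gray v) (Gray c) = hl (Gray v) (Gray c)"
    unfolding hamming_def using Gray_len[OF v] Gray_len[OF c] by (simp add: hl_card)
  also have "\<dots> = hl (fst v) (fst c) + (\<Sum>j<b. hl (gray (snd v!j)) (gray (snd c!j)))"
    unfolding Gray_def using l by (simp add: hl_append hl_concat)
  also have "hl (fst v) (fst c) = card {i. i < a \<and> fst (sub v c) ! i \<noteq> 0}"
  proof -
    have "{i. i < length (fst v) \<and> fst v ! i \<noteq> fst c ! i} = {i. i < a \<and> fst (sub v c) ! i \<noteq> 0}"
    proof (intro Collect_cong iffI)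
      fix i assume "i < length (fst v) \<and> fst v ! i \<noteq> fst c ! i"
      then show "i < a \<and> fst (sub v c) ! i \<noteq> 0"
        using rng1[OF v, of i] rng1[OF c, of i] l v c by (auto simp: nths)
    next
      fix i assume "i < a \<and> fst (sub v c) ! i \<noteq> 0"
      then show "i < length (fst v) \<and> fst v ! i \<noteq> fst c ! i"
        using rng1[OF v, of i] rng1[OF c, of i] l v c by (auto simp: nths)
    qed
    then show ?thesis using l by (simp add: hl_card)
  qed
  also have "(\<Sum>j<b. hl (gray (snd v!j)) (gray (snd c!j))) = (\<Sum>j<b. lee (snd (sub v c) ! j))"
  proof (rule sum.cong)
    fix j assume "j \<in> {..<b}"
    then have j: "j < b" by simp
    show "hl (gray (snd v!j)) (gray (snd c!j)) = lee (snd (sub v c) ! j)"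
      using rng2[OF v j] rng2[OF c j] j v c
      by (subst hl_gray) (auto simp: nths)
  qed simp
  finally show ?thesis unfolding W_def .
qed

end


context sp begin

definition ee :: "nat \<Rightarrow> int list \<times> int list" where
  "ee i = ((replicate a 0)[i:=1], replicate b 0)"
definition ff :: "int \<Rightarrow> nat \<Rightarrow> int list \<times> int list" where
  "ff k j = (replicate a 0, (replicate b 0)[j:=k])"
definition E where
  "E = {z24_zero a b} \<union> ee ` {..<a} \<union> ff 1 ` {..<b} \<union> ff 3 ` {..<b}"

lemma ee_A: "i < a \<Longrightarrow> ee i \<in> A"
  unfolding memA ee_def by (auto simp: nth_list_update)
lemma ff_A: "j < b \<Longrightarrow> k \<in> {0,1,2,3} \<Longrightarrow> ff k j \<in> A"
  unfolding memA ff_def by (auto simp: nth_list_update)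

lemma E_A: "E \<subseteq> A"
  unfolding E_def using zero_A ee_A ff_A by auto

lemma lee0: "lee k = 0 \<longleftrightarrow> k = 0" by (simp add: lee_def)

lemma W_zero: "W (z24_zero a b) = 0"
  unfolding W_def z24_zero_def by (simp add: lee_def)

lemma W_ee: "i < a \<Longrightarrow> W (ee i) = 1"
proof -
  assume i: "i < a"
  have "{i'. i' < a \<and> fst (ee i) ! i' \<noteq> 0} = {i}"
    using i by (auto simp: ee_def nth_list_update)
  then show ?thesis unfolding W_def by (simp add: ee_def lee_def)
qed

lemma W_ff: "j < b \<Longrightarrow> k \<in> {1,3} \<Longrightarrow> W (ff k j) = 1"
proof -
  assume j: "j < b" and k: "k \<in> {1,3}"
  have "{i'. i' < a \<and> fst (ff k j) ! i' \<noteq> 0} = {}"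
    by (auto simp: ff_def)
  moreover have "(\<Sum>j'<b. lee (snd (ff k j) ! j')) = (\<Sum>j'<b. if j' = j then 1 else 0)"
    using k j by (intro sum.cong) (auto simp: ff_def nth_list_update lee_def)
  ultimately show ?thesis unfolding W_def using j by simp
qed

lemma E_W: "e \<in> E \<Longrightarrow> W e \<le> 1"
  unfolding E_def using W_zero W_ee W_ff by auto

lemma W_E: assumes d: "d \<in> A" and w: "W d \<le> 1" shows "d \<in> E"
proof -
  let ?S = "{i. i < a \<and> fst d ! i \<noteq> 0}"
  let ?T = "\<Sum>j<b. lee (snd d ! j)"
  have fin: "finite ?S" by simp
  have le: "card ?S + ?T \<le> 1" using w unfolding W_def .
  show ?thesis
  proof (cases "card ?S = 1")
    case True
    then have T0: "?T = 0" using le by simp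
    then have s0: "\<forall>j<b. snd d ! j = 0" using lee0 by simp
    from True obtain i where Si: "?S = {i}" by (auto simp: card_Suc_eq)
    then have ia: "i < a" by auto
    have "d = ee i"
    proof (subst eqA[OF d ee_A[OF ia]], intro conjI allI impI)
      fix i' assume i': "i' < a"
      show "fst d ! i' = fst (ee i) ! i'"
      proof (cases "i' = i")
        case True then show ?thesis using Si i' rng1[OF d i'] by (auto simp: ee_def nth_list_update)
      next
        case False
        then have "i' \<notin> ?S" using Si by auto
        then show ?thesis using False i' by (auto simp: ee_def nth_list_update)
      qed
    next
      fix j assume "j < b" then show "snd d ! j = snd (ee i) ! j" using s0 by (simp add: ee_def)
    qed
    then show ?thesis unfolding E_def using ia by auto
  next
    case False
    then have "card ?S = 0" using le by linarith
    then have S0: "?S = {}" using fin by (simp del: card_0_eq add: card_0_eq[OF fin])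
    then have f0: "\<forall>i<a. fst d ! i = 0" by auto
    show ?thesis
    proof (cases "\<forall>j<b. snd d ! j = 0")
      case True
      have "d = z24_zero a b"
        using True f0 by (subst eqA[OF d zero_A]) (simp add: z24_zero_def)
      then show ?thesis unfolding E_def by auto
    next
      case False
      then obtain j where j: "j < b" "snd d ! j \<noteq> 0" by auto
      have Tle: "?T \<le> 1" using le by simp
      have "lee (snd d ! j) \<le> ?T" using j by (intro member_le_sum) auto
      then have "lee (snd d ! j) = 1" using j Tle lee0[of "snd d ! j"] by linarith
      then have dj: "snd d ! j = 1 \<or> snd d ! j = 3" using rng2[OF d j(1)] by (auto simp: lee_def)
      have oth: "snd d ! j' = 0" if j': "j' < b" "j' \<noteq> j" for j'
      proof -
        have "(\<Sum>l\<in>{j,j'}. lee (snd d ! l)) \<le> ?T"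
          using j j' by (intro sum_mono2) auto
        then have "lee (snd d ! j) + lee (snd d ! j') \<le> 1" using j' Tle by simp
        then show ?thesis using \<open>lee (snd d ! j) = 1\<close> lee0 by simp
      qed
      have "d = ff (snd d ! j) j"
      proof (subst eqA[OF d ff_A[OF j(1)]])
        show "snd d ! j \<in> {0,1,2,3}" using dj by auto
        show "(\<forall>i<a. fst d ! i = fst (ff (snd d ! j) j) ! i) \<and>
          (\<forall>l<b. snd d ! l = snd (ff (snd d ! j) j) ! l)"
          using f0 oth j(1) by (auto simp: ff_def nth_list_update)
      qed
      then show ?thesis unfolding E_def using dj j by auto
    qed
  qed
qed

lemma E_iff: "d \<in> A \<Longrightarrow> d \<in> E \<longleftrightarrow> W d \<le> 1"
  using E_W W_E by blast

end


locale code = sp +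
  fixes C :: "(int list \<times> int list) set" and x y :: "int list"
  assumes addC: "Z2Z4_additive a b C" and perf: "Z2Z4_perfect1 a b C"
    and zD: "(x, y) \<in> Z2Z4_dual a b C"
    and ord4: "z24_add (x, y) (x, y) \<noteq> z24_zero a b"
begin

lemma C_A: "C \<subseteq> A" using addC unfolding Z2Z4_additive_def by auto
lemma C_add: "c \<in> C \<Longrightarrow> c' \<in> C \<Longrightarrow> z24_add c c' \<in> C" using addC unfolding Z2Z4_additive_def by auto
lemma C_neg: "c \<in> C \<Longrightarrow> z24_neg c \<in> C" using addC unfolding Z2Z4_additive_def by auto
lemma C_zero: "z24_zero a b \<in> C" using addC unfolding Z2Z4_additive_def by auto
lemma C_inner: "c \<in> C \<Longrightarrow> z24_inner c (x, y) = 0" using zD unfolding Z2Z4_dual_def by auto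
lemma z_A: "(x, y) \<in> A" using zD unfolding Z2Z4_dual_def by auto

lemma Gray_inj: assumes c: "c \<in> A" and c': "c' \<in> A" and g: "Gray c = Gray c'"
  shows "c = c'"
proof -
  have "hamming (Gray c) (Gray c') = 0" unfolding g hamming_def by simp
  then have w: "W (sub c c') = 0" using ham_W[OF c c'] by simp
  then have S: "card {i. i < a \<and> fst (sub c c') ! i \<noteq> 0} = 0" and T: "(\<Sum>j<b. lee (snd (sub c c') ! j)) = 0"
    unfolding W_def by auto
  have "{i. i < a \<and> fst (sub c c') ! i \<noteq> 0} = {}" using S by (simp del: card_0_eq add: card_0_eq)
  then have f: "\<forall>i<a. fst (sub c c') ! i = 0" by auto
  have s: "\<forall>j<b. snd (sub c c') ! j = 0" using T lee0 by simp
  show ?thesis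
  proof (subst eqA[OF c c'], intro conjI allI impI)
    fix i assume i: "i < a"
    show "fst c ! i = fst c' ! i"
      using f[rule_format, OF i] rng1[OF c i] rng1[OF c' i] i c c' by (auto simp: nths)
  next
    fix j assume j: "j < b"
    show "snd c ! j = snd c' ! j"
      using s[rule_format, OF j] rng2[OF c j] rng2[OF c' j] j c c' by (auto simp: nths)
  qed
qed

definition m :: "(int list \<times> int list) \<times> (int list \<times> int list) \<Rightarrow> int list \<times> int list" where
  "m p = z24_add (fst p) (snd p)"

lemma perf_ex: assumes v: "v \<in> A" shows "\<exists>!g. g \<in> Gray ` C \<and> hamming (Gray v) g \<le> 1"
  using perf Gray_vecs[OF v] unfolding Z2Z4_perfect1_def perfect1_def by blast

lemma m_inj: "inj_on m (C \<times> E)"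
proof (rule inj_onI)
  fix p q assume p: "p \<in> C \<times> E" and q: "q \<in> C \<times> E" and eq: "m p = m q"
  obtain c e where pc: "p = (c, e)" "c \<in> C" "e \<in> E" using p by auto
  obtain c' e' where qc: "q = (c', e')" "c' \<in> C" "e' \<in> E" using q by auto
  have cA: "c \<in> A" "c' \<in> A" "e \<in> A" "e' \<in> A" using pc qc C_A E_A by auto
  define v where "v = z24_add c e"
  have v': "v = z24_add c' e'" using eq pc qc unfolding v_def m_def by simp
  have vA: "v \<in> A" unfolding v_def using cA by (simp add: add_A)
  have s1: "sub v c = e" unfolding v_def using add_sub_cancel2 cA by simp
  have s2: "sub v c' = e'" unfolding v' using add_sub_cancel2 cA by simp
  have h1: "hamming (Gray v) (Gray c) \<le> 1" using ham_W[OF vA cA(1)] s1 E_W pc by simp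
  have h2: "hamming (Gray v) (Gray c') \<le> 1" using ham_W[OF vA cA(2)] s2 E_W qc by simp
  have "Gray c = Gray c'" using perf_ex[OF vA] h1 h2 pc qc by blast
  then have "c = c'" using Gray_inj cA by blast
  then show "p = q" using s1 s2 pc qc by simp
qed

lemma m_img: "m ` (C \<times> E) = A"
proof (intro set_eqI iffI)
  fix v assume "v \<in> m ` (C \<times> E)"
  then show "v \<in> A" using C_A E_A by (auto simp: m_def intro!: add_A)
next
  fix v assume vA: "v \<in> A"
  then obtain g where g: "g \<in> Gray ` C" "hamming (Gray v) g \<le> 1" using perf_ex by blast
  then obtain c where c: "c \<in> C" "g = Gray c" by auto
  have cA: "c \<in> A" using c C_A by auto
  have "W (sub v c) \<le> 1" using ham_W[OF vA cA] g c by simp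
  then have e: "sub v c \<in> E" using W_E sub_A vA cA by blast
  have "v = m (c, sub v c)" unfolding m_def using add_sub_cancel cA vA by simp
  then show "v \<in> m ` (C \<times> E)" using c e by blast
qed

lemma m_bij: "bij_betw m (C \<times> E) A"
  using m_inj m_img unfolding bij_betw_def by blast

end


lemma i_pow_add: assumes "0 \<le> s" "s < 4" "0 \<le> t" "t < 4"
  shows "\<i> ^ nat ((s + t) mod 4) = \<i> ^ nat s * \<i> ^ nat (t::int)"
proof -
  have "s \<in> {0,1,2,3}" "t \<in> {0,1,2,3}" using assms by auto
  then show ?thesis by (elim insertE; simp add: power2_eq_square power3_eq_cube)
qed

lemma two_mod: "(2 * ((k::int) mod 2) * z) mod 4 = (2 * k * z) mod 4"
proof -
  obtain q where q: "k = 2 * q + k mod 2" by (metis div_mult_mod_eq mult.commute)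
  have "2 * k * z = (2 * (k mod 2) * z) + 4 * (q * z)"
    by (subst q) (simp add: algebra_simps)
  then show ?thesis by (simp only: mod_add_self2 mod_mult_self2 mod_mult_self1 mult.commute[of 4] mod_mult_self4)
qed

context sp begin

lemma finA: "finite A"
proof -
  have "Z2vecs a = {xs. set xs \<subseteq> {0,1} \<and> length xs = a}" unfolding Z2vecs_def by auto
  moreover have "Z4vecs b = {xs. set xs \<subseteq> {0,1,2,3} \<and> length xs = b}" unfolding Z4vecs_def by auto
  ultimately show ?thesis unfolding Z2Z4space_def
    by (simp add: finite_lists_length_eq)
qed

lemma add_cancel: "s \<in> A \<Longrightarrow> v \<in> A \<Longrightarrow> w \<in> A \<Longrightarrow> z24_add s v = z24_add s w \<Longrightarrow> v = w"
  by (metis add_sub_cancel2)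

lemma char_sum0:
  fixes f :: "int list \<times> int list \<Rightarrow> complex"
  assumes SA: "S \<subseteq> A" and s: "s \<in> S" and cl: "\<And>v. v \<in> S \<Longrightarrow> z24_add s v \<in> S"
    and mult: "\<And>v. v \<in> S \<Longrightarrow> f (z24_add s v) = f s * f v" and ns: "f s \<noteq> 1"
  shows "(\<Sum>v\<in>S. f v) = 0"
proof -
  have fin: "finite S" using SA finA finite_subset by blast
  have inj: "inj_on (z24_add s) S"
    using add_cancel SA s by (intro inj_onI) blast
  have img: "z24_add s ` S = S" using endo_inj_surj[OF fin _ inj] cl by blast
  have "(\<Sum>v\<in>S. f v) = (\<Sum>v\<in>z24_add s ` S. f v)" using img by simp
  also have "\<dots> = (\<Sum>v\<in>S. f (z24_add s v))" using inj by (simp add: sum.reindex)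
  also have "\<dots> = f s * (\<Sum>v\<in>S. f v)" using mult by (simp add: sum_distrib_left)
  finally have "(1 - f s) * (\<Sum>v\<in>S. f v) = 0" by (simp add: algebra_simps)
  then show ?thesis using ns by simp
qed

end

context code begin

definition chi :: "int list \<times> int list \<Rightarrow> complex" where
  "chi v = \<i> ^ nat (z24_inner v (x, y))"

lemma inner_rng: "0 \<le> z24_inner v w \<and> z24_inner v w < 4"
  unfolding z24_inner_def by simp

lemma lens: "v \<in> A \<Longrightarrow> length (fst v) = a \<and> length (snd v) = b"
  unfolding memA by auto

lemma inner_eq: "v \<in> A \<Longrightarrow> z24_inner v (x, y) =
   (2 * (\<Sum>i<a. fst v ! i * x ! i) + (\<Sum>j<b. snd v ! j * y ! j)) mod 4"
  unfolding z24_inner_def using lens by simp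

lemma inner_add: assumes v: "v \<in> A" and w: "w \<in> A"
  shows "z24_inner (z24_add v w) (x, y) = (z24_inner v (x, y) + z24_inner w (x, y)) mod 4"
proof -
  have vw: "z24_add v w \<in> A" using v w by (rule add_A)
  have P: "(2 * (\<Sum>i<a. fst (z24_add v w) ! i * x ! i)) mod 4
        = (2 * (\<Sum>i<a. fst v ! i * x ! i) + 2 * (\<Sum>i<a. fst w ! i * x ! i)) mod 4"
  proof -
    have "(2 * (\<Sum>i<a. fst (z24_add v w) ! i * x ! i)) mod 4
        = (\<Sum>i<a. (2 * ((fst v ! i + fst w ! i) mod 2) * x ! i) mod 4) mod 4"
      using v w by (simp add: sum_distrib_left nth_add1 mod_sum_eq mult.assoc)
    also have "\<dots> = (\<Sum>i<a. (2 * (fst v ! i + fst w ! i) * x ! i) mod 4) mod 4"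
      by (simp only: two_mod)
    also have "\<dots> = (\<Sum>i<a. 2 * (fst v ! i + fst w ! i) * x ! i) mod 4"
      by (simp add: mod_sum_eq)
    also have "\<dots> = (2 * (\<Sum>i<a. fst v ! i * x ! i) + 2 * (\<Sum>i<a. fst w ! i * x ! i)) mod 4"
      by (simp add: sum_distrib_left algebra_simps sum.distrib)
    finally show ?thesis .
  qed
  have Q: "(\<Sum>j<b. snd (z24_add v w) ! j * y ! j) mod 4
        = ((\<Sum>j<b. snd v ! j * y ! j) + (\<Sum>j<b. snd w ! j * y ! j)) mod 4"
  proof -
    have "(\<Sum>j<b. snd (z24_add v w) ! j * y ! j) mod 4
        = (\<Sum>j<b. ((snd v ! j + snd w ! j) mod 4 * y ! j) mod 4) mod 4"
      using v w by (simp add: nth_add2 mod_sum_eq)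
    also have "\<dots> = (\<Sum>j<b. ((snd v ! j + snd w ! j) * y ! j) mod 4) mod 4"
      by (simp add: mod_mult_left_eq)
    also have "\<dots> = (\<Sum>j<b. (snd v ! j + snd w ! j) * y ! j) mod 4"
      by (simp add: mod_sum_eq)
    also have "\<dots> = ((\<Sum>j<b. snd v ! j * y ! j) + (\<Sum>j<b. snd w ! j * y ! j)) mod 4"
      by (simp add: algebra_simps sum.distrib)
    finally show ?thesis .
  qed
  define p1 where "p1 = 2 * (\<Sum>i<a. fst (z24_add v w) ! i * x ! i)"
  define q1 where "q1 = (\<Sum>j<b. snd (z24_add v w) ! j * y ! j)"
  define pv where "pv = 2 * (\<Sum>i<a. fst v ! i * x ! i)"
  define pw where "pw = 2 * (\<Sum>i<a. fst w ! i * x ! i)"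
  define qv where "qv = (\<Sum>j<b. snd v ! j * y ! j)"
  define qw where "qw = (\<Sum>j<b. snd w ! j * y ! j)"
  have P': "p1 mod 4 = (pv + pw) mod 4" using P unfolding p1_def pv_def pw_def .
  have Q': "q1 mod 4 = (qv + qw) mod 4" using Q unfolding q1_def qv_def qw_def .
  have "(p1 + q1) mod 4 = ((pv + qv) mod 4 + (pw + qw) mod 4) mod 4"
  proof -
    have "(p1 + q1) mod 4 = (p1 mod 4 + q1 mod 4) mod 4" by (rule mod_add_eq[symmetric])
    also have "\<dots> = ((pv + pw) mod 4 + (qv + qw) mod 4) mod 4" using P' Q' by simp
    also have "\<dots> = ((pv + pw) + (qv + qw)) mod 4" by (rule mod_add_eq)
    also have "\<dots> = ((pv + qv) + (pw + qw)) mod 4" by (simp add: algebra_simps)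
    also have "\<dots> = ((pv + qv) mod 4 + (pw + qw) mod 4) mod 4" by (rule mod_add_eq[symmetric])
    finally show ?thesis .
  qed
  then show ?thesis unfolding inner_eq[OF vw] inner_eq[OF v] inner_eq[OF w]
    p1_def[symmetric] q1_def[symmetric] pv_def[symmetric] pw_def[symmetric] qv_def[symmetric] qw_def[symmetric] .
qed

lemma chi_mult: "v \<in> A \<Longrightarrow> w \<in> A \<Longrightarrow> chi (z24_add v w) = chi v * chi w"
  unfolding chi_def inner_add using inner_rng by (intro i_pow_add) auto

lemma chi_C: "c \<in> C \<Longrightarrow> chi c = 1"
  unfolding chi_def using C_inner by simp

end


context code begin

lemma finC: "finite C" using C_A finA finite_subset by blast
lemma finE: "finite E" using E_A finA finite_subset by blast
lemma cardC: "card C > 0" using finC C_zero by (auto simp: card_gt_0_iff)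

lemma sum_sub_fact:
  fixes f :: "int list \<times> int list \<Rightarrow> complex"
  assumes mult: "\<And>v w. v \<in> A \<Longrightarrow> w \<in> A \<Longrightarrow> f (z24_add v w) = f v * f w"
    and fC: "\<And>c. c \<in> C \<Longrightarrow> f c = 1"
    and sub: "F \<subseteq> E" and img: "m ` (C \<times> F) = S"
  shows "(\<Sum>v\<in>S. f v) = of_nat (card C) * (\<Sum>e\<in>F. f e)"
proof -
  have inj: "inj_on m (C \<times> F)" by (rule inj_on_subset[OF m_inj]) (use sub in auto)
  have "(\<Sum>v\<in>S. f v) = (\<Sum>v\<in>m ` (C \<times> F). f v)" using img by simp
  also have "\<dots> = (\<Sum>p\<in>C \<times> F. f (m p))"
    using inj by (simp add: sum.reindex)
  also have "\<dots> = (\<Sum>c\<in>C. \<Sum>e\<in>F. f (m (c, e)))"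
    by (simp add: sum.cartesian_product)
  also have "\<dots> = (\<Sum>c\<in>C. \<Sum>e\<in>F. f e)"
  proof (intro sum.cong refl)
    fix c e
    assume ce: "c \<in> C" "e \<in> F"
    have "c \<in> A" "e \<in> A" using ce C_A E_A sub by auto
    then have "f (m (c, e)) = f c * f e" unfolding m_def using mult by simp
    then show "f (m (c, e)) = f e" using fC[OF ce(1)] by simp
  qed
  also have "\<dots> = of_nat (card C) * (\<Sum>e\<in>F. f e)" by simp
  finally show ?thesis .
qed

lemma ee_fst: "i < a \<Longrightarrow> i' < a \<Longrightarrow> fst (ee i) ! i' = (if i' = i then 1 else 0)"
  by (simp add: ee_def nth_list_update)
lemma ff_snd: "j < b \<Longrightarrow> j' < b \<Longrightarrow> snd (ff k j) ! j' = (if j' = j then k else 0)"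
  by (simp add: ff_def nth_list_update)

lemma ee_inj: "inj_on ee {..<a}"
proof (rule inj_onI)
  fix i i' assume "i \<in> {..<a}" "i' \<in> {..<a}" "ee i = ee i'"
  then show "i = i'" using ee_fst[of i i] ee_fst[of i' i] by (auto split: if_splits)
qed
lemma ff_inj: "k \<noteq> 0 \<Longrightarrow> inj_on (ff k) {..<b}"
proof (rule inj_onI)
  fix j j' assume "k \<noteq> 0" "j \<in> {..<b}" "j' \<in> {..<b}" "ff k j = ff k j'"
  then show "j = j'" using ff_snd[of j j k] ff_snd[of j' j k] by (auto split: if_splits)
qed

lemma zero_fst: "i < a \<Longrightarrow> fst (z24_zero a b) ! i = 0" by (simp add: z24_zero_def)
lemma zero_snd: "j < b \<Longrightarrow> snd (z24_zero a b) ! j = 0" by (simp add: z24_zero_def)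

lemma ee_ne_zero[simp]: "i < a \<Longrightarrow> ee i \<noteq> z24_zero a b"
proof
  assume "i < a" "ee i = z24_zero a b"
  then show False using ee_fst[of i i] zero_fst[of i] by simp
qed
lemma ff_ne_zero[simp]: "j < b \<Longrightarrow> k \<noteq> 0 \<Longrightarrow> ff k j \<noteq> z24_zero a b"
proof
  assume "j < b" "k \<noteq> 0" "ff k j = z24_zero a b"
  then show False using ff_snd[of j j k] zero_snd[of j] by simp
qed
lemma ee_ne_ff[simp]: "i < a \<Longrightarrow> ee i \<noteq> ff k j"
proof
  assume "i < a" "ee i = ff k j"
  then show False using ee_fst[of i i] by (simp add: ff_def)
qed
lemma ff13[simp]: "j < b \<Longrightarrow> j' < b \<Longrightarrow> ff 1 j \<noteq> ff 3 j'"
proof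
  assume j: "j < b" "j' < b" and e: "ff 1 j = ff 3 j'"
  have "snd (ff 1 j) ! j = 1" using ff_snd[OF j(1) j(1)] by simp
  moreover have "snd (ff 3 j') ! j \<in> {0, 3}" using ff_snd[OF j(2) j(1)] by simp
  ultimately show False using e by auto
qed

lemma sum_E:
  fixes f :: "int list \<times> int list \<Rightarrow> complex"
  shows "(\<Sum>e\<in>E. f e) = f (z24_zero a b) + (\<Sum>i<a. f (ee i)) + (\<Sum>j<b. f (ff 1 j)) + (\<Sum>j<b. f (ff 3 j))"
proof -
  have d1: "{z24_zero a b} \<inter> ee ` {..<a} = {}" by (auto dest: sym)
  have d2: "({z24_zero a b} \<union> ee ` {..<a}) \<inter> ff 1 ` {..<b} = {}" by (auto dest: sym)
  have d3: "({z24_zero a b} \<union> ee ` {..<a} \<union> ff 1 ` {..<b}) \<inter> ff 3 ` {..<b} = {}" by (auto dest: sym)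
  have "(\<Sum>e\<in>E. f e) = (\<Sum>e\<in>{z24_zero a b} \<union> ee ` {..<a} \<union> ff 1 ` {..<b}. f e) + (\<Sum>e\<in>ff 3 ` {..<b}. f e)"
    unfolding E_def using d3 by (intro sum.union_disjoint) auto
  also have "(\<Sum>e\<in>{z24_zero a b} \<union> ee ` {..<a} \<union> ff 1 ` {..<b}. f e) = (\<Sum>e\<in>{z24_zero a b} \<union> ee ` {..<a}. f e) + (\<Sum>e\<in>ff 1 ` {..<b}. f e)"
    using d2 by (intro sum.union_disjoint) auto
  also have "(\<Sum>e\<in>{z24_zero a b} \<union> ee ` {..<a}. f e) = f (z24_zero a b) + (\<Sum>e\<in>ee ` {..<a}. f e)"
    using d1 by (subst sum.union_disjoint) auto
  also have "(\<Sum>e\<in>ee ` {..<a}. f e) = (\<Sum>i<a. f (ee i))" using ee_inj by (simp add: sum.reindex)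
  also have "(\<Sum>e\<in>ff 1 ` {..<b}. f e) = (\<Sum>j<b. f (ff 1 j))" using ff_inj[of 1] by (simp add: sum.reindex)
  also have "(\<Sum>e\<in>ff 3 ` {..<b}. f e) = (\<Sum>j<b. f (ff 3 j))" using ff_inj[of 3] by (simp add: sum.reindex)
  finally show ?thesis .
qed

definition EH where "EH = {z24_zero a b} \<union> ee ` {..<a}"

lemma EH_E: "EH \<subseteq> E" unfolding EH_def E_def by auto

lemma sum_EH:
  fixes f :: "int list \<times> int list \<Rightarrow> complex"
  shows "(\<Sum>e\<in>EH. f e) = f (z24_zero a b) + (\<Sum>i<a. f (ee i))"
proof -
  have d1: "{z24_zero a b} \<inter> ee ` {..<a} = {}" by (auto dest: sym)
  have "(\<Sum>e\<in>EH. f e) = f (z24_zero a b) + (\<Sum>e\<in>ee ` {..<a}. f e)"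
    unfolding EH_def using d1 by (subst sum.union_disjoint) auto
  also have "(\<Sum>e\<in>ee ` {..<a}. f e) = (\<Sum>i<a. f (ee i))" using ee_inj by (simp add: sum.reindex)
  finally show ?thesis .
qed

lemma x_rng: "i < a \<Longrightarrow> x ! i = 0 \<or> x ! i = 1" using rng1[OF z_A] by simp
lemma y_rng: "j < b \<Longrightarrow> y ! j = 0 \<or> y ! j = 1 \<or> y ! j = 2 \<or> y ! j = 3" using rng2[OF z_A] by simp

lemma inner_zero: "z24_inner (z24_zero a b) (x, y) = 0"
  unfolding inner_eq[OF zero_A] by (simp add: z24_zero_def)

lemma inner_ee: "i < a \<Longrightarrow> z24_inner (ee i) (x, y) = (2 * x ! i) mod 4"
proof -
  assume i: "i < a"
  have "(\<Sum>i'<a. fst (ee i) ! i' * x ! i') = (\<Sum>i'<a. if i' = i then x ! i else 0)"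
    by (intro sum.cong) (auto simp: ee_fst i)
  also have "\<dots> = x ! i" using i by simp
  finally show ?thesis unfolding inner_eq[OF ee_A[OF i]] by (simp add: ee_def)
qed

lemma inner_ff: "j < b \<Longrightarrow> k \<in> {0,1,2,3} \<Longrightarrow> z24_inner (ff k j) (x, y) = (k * y ! j) mod 4"
proof -
  assume j: "j < b" and k: "k \<in> {0,1,2,3}"
  have "(\<Sum>j'<b. snd (ff k j) ! j' * y ! j') = (\<Sum>j'<b. if j' = j then k * y ! j else 0)"
    by (intro sum.cong) (auto simp: ff_snd j)
  also have "\<dots> = k * y ! j" using j by simp
  finally show ?thesis unfolding inner_eq[OF ff_A[OF j k]] by (simp add: ff_def)
qed

lemma chi_zero: "chi (z24_zero a b) = 1" unfolding chi_def inner_zero by simp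
lemma chi_ee: "i < a \<Longrightarrow> chi (ee i) = (if x ! i = 0 then 1 else -1)"
  unfolding chi_def using x_rng[of i] by (auto simp: inner_ee)
lemma chi_ff1: "j < b \<Longrightarrow> chi (ff 1 j) = \<i> ^ nat (y ! j)"
  unfolding chi_def using y_rng[of j] by (auto simp: inner_ff)
lemma chi_ff2: "j < b \<Longrightarrow> chi (ff 2 j) = (if y ! j \<in> {1,3} then -1 else 1)"
  unfolding chi_def using y_rng[of j] by (auto simp: inner_ff)
lemma chi_ff3: "j < b \<Longrightarrow> chi (ff 3 j) = \<i> ^ nat ((3 * y ! j) mod 4)"
  unfolding chi_def using y_rng[of j] by (auto simp: inner_ff)

lemma y_odd: "\<exists>j<b. y ! j = 1 \<or> y ! j = 3"
proof (rule ccontr)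
  assume "\<not> ?thesis"
  then have ev: "\<forall>j<b. y ! j = 0 \<or> y ! j = 2" using y_rng by blast
  have "z24_add (x, y) (x, y) = z24_zero a b"
  proof (subst eqA[OF add_A[OF z_A z_A] zero_A], intro conjI allI impI)
    fix i assume i: "i < a" show "fst (z24_add (x, y) (x, y)) ! i = fst (z24_zero a b) ! i"
      using x_rng[OF i] i by (auto simp: nth_add1[OF z_A z_A i] zero_fst)
  next
    fix j assume j: "j < b" show "snd (z24_add (x, y) (x, y)) ! j = snd (z24_zero a b) ! j"
      using ev j by (auto simp: nth_add2[OF z_A z_A j] zero_snd)
  qed
  then show False using ord4 by simp
qed

end


lemma sum_if_card: "(\<Sum>j<(b::nat). if P j then (c::complex) else 0) = of_nat (card {j. j < b \<and> P j}) * c"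
proof -
  have "(\<Sum>j<b. if P j then c else 0) = sum (\<lambda>_. c) {j\<in>{..<b}. P j}"
    by (rule sum.inter_filter[symmetric]) simp
  also have "{j\<in>{..<b}. P j} = {j. j < b \<and> P j}" by auto
  finally show ?thesis by simp
qed

lemma pj1: "y \<in> {0,1,2,3} \<Longrightarrow> \<i> ^ nat y + \<i> ^ nat ((3 * y) mod 4) =
   (if y = 0 then 2 else 0) + (if y = 2 then -2 else (0::complex))"
  by (elim insertE; simp add: power2_eq_square power3_eq_cube)

lemma pj2: "y \<in> {0,1,2,3} \<Longrightarrow> (\<i> ^ nat y)^2 + (\<i> ^ nat ((3 * y) mod 4))^2 =
   2 + (if y \<in> {1,3} then -4 else (0::complex))"
  by (elim insertE; simp add: power2_eq_square power3_eq_cube)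

lemma two_mod4: "(2 * (t mod 4)) mod 4 = (2 * t) mod (4::int)"
proof -
  have "2 * (t mod 4) = (2 * t) mod 8" using mod_mult_mult1[of 2 t 4] by simp
  then show ?thesis by (simp add: mod_mod_cancel)
qed

lemma two_odd: "k \<in> {1,3} \<Longrightarrow> (2 * ((s + k) mod 4)) mod 4 = (2 * s mod 4 + 2) mod (4::int)"
proof -
  assume k: "k \<in> {1,3}"
  have "(2 * ((s + k) mod 4)) mod 4 = (2 * s + 2 * k) mod 4" by (simp add: two_mod4 algebra_simps)
  also have "\<dots> = (2 * s + 2) mod 4"
  proof (cases "k = 1")
    case True then show ?thesis by simp
  next
    case False then have "k = 3" using k by auto
    then have "2 * s + 2 * k = (2 * s + 2) + 4" by simp
    then show ?thesis by (metis mod_add_self2)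
  qed
  also have "\<dots> = (2 * s mod 4 + 2) mod 4" by (simp add: mod_add_left_eq)
  finally show ?thesis .
qed

lemma two_odd2: "k \<in> {1,3} \<Longrightarrow> (2 * s + 2 * k) mod 4 = (2 * s mod 4 + 2) mod (4::int)"
  using two_odd[of k s] by (simp add: two_mod4 algebra_simps)

context code begin

definition H where "H = {v \<in> A. z24_add v v \<in> C}"

lemma dbl_snd0: assumes c: "c \<in> A" and e: "e \<in> A" and s: "\<forall>j<b. snd e ! j = 0"
  shows "z24_add (z24_add c e) (z24_add c e) = z24_add c c"
  apply (subst eqA[where a=a and b=b])
    apply (simp_all add: add_A c e)
  apply (intro conjI allI impI)
  subgoal for i using rng1[OF c, of i] rng1[OF e, of i] c e by (simp add: nth_add1 add_A)
  subgoal for j using rng2[OF c, of j] s c e by (simp add: nth_add2 add_A two_mod4)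
  done

lemma dbl_ff: assumes c: "c \<in> A" and j: "j < b" and k: "k \<in> {1,3}"
  shows "z24_add (z24_add c (ff k j)) (z24_add c (ff k j)) = z24_add (z24_add c c) (ff 2 j)"
proof -
  have f: "ff k j \<in> A" "ff 2 j \<in> A" using ff_A[OF j] k by auto
  show ?thesis
  apply (subst eqA[where a=a and b=b])
    apply (simp_all add: add_A c f)
  apply (intro conjI allI impI)
  subgoal for i using rng1[OF c, of i] c f by (simp add: nth_add1 add_A ff_def)
  subgoal for l using rng2[OF c, of l] c f j k by (simp add: nth_add2 add_A ff_snd two_odd2 two_mod4)
  done
qed

lemma ff_sum: assumes j: "j < b" shows "z24_add (ff 2 j) (ff 3 j) = ff 1 j"
proof -
  have f: "ff 1 j \<in> A" "ff 2 j \<in> A" "ff 3 j \<in> A" using ff_A[OF j] by auto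
  show ?thesis
  apply (subst eqA[where a=a and b=b])
    apply (simp_all add: add_A f)
  apply (intro conjI allI impI)
  subgoal for i using f by (simp add: nth_add1 ff_def)
  subgoal for l using f j by (simp add: nth_add2 ff_snd)
  done
qed

lemma zero_add: assumes v: "v \<in> A" shows "z24_add (z24_zero a b) v = v"
  apply (subst eqA[where a=a and b=b])
    apply (simp_all add: add_A v zero_A)
  apply (intro conjI allI impI)
  subgoal for i using rng1[OF v, of i] v zero_A by (auto simp: nth_add1 zero_fst)
  subgoal for l using rng2[OF v, of l] v zero_A by (auto simp: nth_add2 zero_snd)
  done

lemma dbl_ff2_shift: assumes v: "v \<in> A" and j: "j < b"
  shows "z24_add (z24_add (ff 2 j) v) (z24_add (ff 2 j) v) = z24_add v v"
proof -
  have f: "ff 2 j \<in> A" using ff_A[OF j] by auto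
  show ?thesis
  apply (subst eqA[where a=a and b=b])
    apply (simp_all add: add_A f v)
  apply (intro conjI allI impI)
  subgoal for i using rng1[OF v, of i] v f by (simp add: nth_add1 add_A ff_def)
  subgoal for l using rng2[OF v, of l] v f j by (cases "l = j") (auto simp: nth_add2 add_A ff_snd)
  done
qed

lemma dbl_ff2: assumes j: "j < b" shows "z24_add (ff 2 j) (ff 2 j) = z24_zero a b"
proof -
  have f: "ff 2 j \<in> A" using ff_A[OF j] by auto
  show ?thesis
  apply (subst eqA[where a=a and b=b])
    apply (simp_all add: add_A f zero_A)
  apply (intro conjI allI impI)
  subgoal for i using f by (simp add: nth_add1 ff_def zero_fst)
  subgoal for l using f j by (simp add: nth_add2 ff_snd zero_snd)
  done
qed

lemma EH_A: "e \<in> EH \<Longrightarrow> e \<in> A \<and> (\<forall>j<b. snd e ! j = 0)"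
  unfolding EH_def using zero_A ee_A by (auto simp: z24_zero_def ee_def)

lemma H_img: "m ` (C \<times> EH) = H"
proof (intro set_eqI iffI)
  fix v assume "v \<in> m ` (C \<times> EH)"
  then obtain c e where ce: "c \<in> C" "e \<in> EH" "v = z24_add c e" unfolding m_def by auto
  have cA: "c \<in> A" using ce C_A by auto
  have eA: "e \<in> A" "\<forall>j<b. snd e ! j = 0" using EH_A ce by auto
  have "z24_add v v = z24_add c c" using dbl_snd0[OF cA eA] ce by simp
  then show "v \<in> H" unfolding H_def using ce C_add add_A cA eA by auto
next
  fix v assume vH: "v \<in> H"
  then have vA: "v \<in> A" and v2: "z24_add v v \<in> C" unfolding H_def by auto
  then obtain c e where ce: "c \<in> C" "e \<in> E" "v = z24_add c e" using m_img unfolding m_def by force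
  have cA: "c \<in> A" using ce C_A by auto
  show "v \<in> m ` (C \<times> EH)"
  proof (cases "e \<in> EH")
    case True then show ?thesis using ce unfolding m_def by force
  next
    case False
    then obtain k j where kj: "k \<in> {1,3}" "j < b" "e = ff k j" using ce(2) unfolding E_def EH_def by auto
    have f2: "ff 2 j \<in> A" using ff_A[OF kj(2)] by auto
    have cc: "z24_add c c \<in> C" using C_add ce by auto
    have "z24_add (z24_add c c) (ff 2 j) \<in> C" using v2 dbl_ff[OF cA kj(2,1)] ce kj by simp
    then have "sub (z24_add (z24_add c c) (ff 2 j)) (z24_add c c) \<in> C"
      unfolding sub_def using cc C_add C_neg by auto
    then have f2C: "ff 2 j \<in> C" using add_sub_cancel2[OF add_A[OF cA cA] f2] by simp
    have "m (ff 2 j, ff 3 j) = m (z24_zero a b, ff 1 j)"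
      unfolding m_def using ff_sum[OF kj(2)] zero_add ff_A[OF kj(2)] by simp
    moreover have "(ff 2 j, ff 3 j) \<in> C \<times> E" "(z24_zero a b, ff 1 j) \<in> C \<times> E"
      using f2C C_zero kj(2) unfolding E_def by auto
    ultimately have "ff 3 j = ff 1 j" using m_inj unfolding inj_on_def by blast
    then show ?thesis using ff13[OF kj(2) kj(2)] by simp
  qed
qed

definition chi2 where "chi2 v = (chi v)^2"

lemma chi2_mult: "v \<in> A \<Longrightarrow> w \<in> A \<Longrightarrow> chi2 (z24_add v w) = chi2 v * chi2 w"
  unfolding chi2_def by (simp add: chi_mult power_mult_distrib)
lemma chi2_C: "c \<in> C \<Longrightarrow> chi2 c = 1" unfolding chi2_def using chi_C by simp

lemma odd_j: obtains j where "j < b" "y ! j = 1 \<or> y ! j = 3" using y_odd by blast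

lemma i_ne1: "y ! j = 1 \<or> y ! j = 3 \<Longrightarrow> \<i> ^ nat (y ! j) \<noteq> 1"
proof
  assume "y ! j = 1 \<or> y ! j = 3" "\<i> ^ nat (y ! j) = 1"
  then show False by (auto simp: power3_eq_cube complex_eq_iff)
qed

lemma S1: "(\<Sum>e\<in>E. chi e) = 0"
proof -
  obtain j where j: "j < b" "y ! j = 1 \<or> y ! j = 3" using odd_j by blast
  have f1: "ff 1 j \<in> A" using ff_A[OF j(1)] by auto
  have "(\<Sum>v\<in>A. chi v) = 0"
  proof (rule char_sum0[of A "ff 1 j"])
    show "A \<subseteq> A" by simp
    show "ff 1 j \<in> A" by (rule f1)
  next
    fix v assume "v \<in> A" then show "z24_add (ff 1 j) v \<in> A" using f1 add_A by blast
  next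
    fix v assume "v \<in> A" then show "chi (z24_add (ff 1 j) v) = chi (ff 1 j) * chi v" using f1 chi_mult by blast
  next
    show "chi (ff 1 j) \<noteq> 1" using chi_ff1[OF j(1)] i_ne1[OF j(2)] by simp
  qed
  moreover have "(\<Sum>v\<in>A. chi v) = of_nat (card C) * (\<Sum>e\<in>E. chi e)"
    by (rule sum_sub_fact[OF chi_mult chi_C _ m_img]) auto
  ultimately show ?thesis using cardC by simp
qed

lemma S2: "(\<Sum>e\<in>E. chi2 e) = 0"
proof -
  obtain j where j: "j < b" "y ! j = 1 \<or> y ! j = 3" using odd_j by blast
  have f1: "ff 1 j \<in> A" using ff_A[OF j(1)] by auto
  have "(\<Sum>v\<in>A. chi2 v) = 0"
  proof (rule char_sum0[of A "ff 1 j"])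
    show "A \<subseteq> A" by simp
    show "ff 1 j \<in> A" by (rule f1)
  next
    fix v assume "v \<in> A" then show "z24_add (ff 1 j) v \<in> A" using f1 add_A by blast
  next
    fix v assume "v \<in> A" then show "chi2 (z24_add (ff 1 j) v) = chi2 (ff 1 j) * chi2 v" using f1 chi2_mult by blast
  next
    have "chi2 (ff 1 j) = -1" using chi_ff1[OF j(1)] j(2) unfolding chi2_def
      by (auto simp: power2_eq_square power3_eq_cube)
    then show "chi2 (ff 1 j) \<noteq> 1" by simp
  qed
  moreover have "(\<Sum>v\<in>A. chi2 v) = of_nat (card C) * (\<Sum>e\<in>E. chi2 e)"
    by (rule sum_sub_fact[OF chi2_mult chi2_C _ m_img]) auto
  ultimately show ?thesis using cardC by simp
qed

lemma H_A: "H \<subseteq> A" unfolding H_def by auto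

lemma S3: "(\<Sum>e\<in>EH. chi e) = 0"
proof -
  obtain j where j: "j < b" "y ! j = 1 \<or> y ! j = 3" using odd_j by blast
  have f2: "ff 2 j \<in> A" using ff_A[OF j(1)] by auto
  have s: "ff 2 j \<in> H" unfolding H_def using f2 dbl_ff2[OF j(1)] C_zero by simp
  have cl: "z24_add (ff 2 j) v \<in> H" if "v \<in> H" for v
    using that dbl_ff2_shift[OF _ j(1), of v] f2 add_A unfolding H_def by auto
  have "(\<Sum>v\<in>H. chi v) = 0"
  proof (rule char_sum0[OF H_A s cl])
    fix v assume "v \<in> H" then show "chi (z24_add (ff 2 j) v) = chi (ff 2 j) * chi v"
      using H_A f2 chi_mult by blast
  next
    show "chi (ff 2 j) \<noteq> 1" using chi_ff2[OF j(1)] j by auto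
  qed
  moreover have "(\<Sum>v\<in>H. chi v) = of_nat (card C) * (\<Sum>e\<in>EH. chi e)"
    by (rule sum_sub_fact[OF chi_mult chi_C EH_E H_img])
  ultimately show ?thesis using cardC by simp
qed

end


context code begin

lemma len_y: "length y = b" using lens[OF z_A] by simp

lemma chi2_zero: "chi2 (z24_zero a b) = 1" unfolding chi2_def chi_zero by simp
lemma chi2_ee: "i < a \<Longrightarrow> chi2 (ee i) = 1" unfolding chi2_def by (simp add: chi_ee)

lemma y_in: "j < b \<Longrightarrow> y ! j \<in> {0,1,2,3}" using y_rng[of j] by auto

lemma eq_n0n2: "card {j. j < b \<and> y ! j = 0} = card {j. j < b \<and> y ! j = 2}"
proof -
  have "(\<Sum>j<b. chi (ff 1 j)) + (\<Sum>j<b. chi (ff 3 j)) = 0"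
    using S1 S3 unfolding sum_E sum_EH by (simp add: algebra_simps)
  then have "(\<Sum>j<b. chi (ff 1 j) + chi (ff 3 j)) = 0" by (simp add: sum.distrib)
  moreover have "(\<Sum>j<b. chi (ff 1 j) + chi (ff 3 j)) =
     (\<Sum>j<b. (if y ! j = 0 then 2 else 0) + (if y ! j = 2 then -2 else (0::complex)))"
  proof (intro sum.cong refl)
    fix j assume "j \<in> {..<b}" then have j: "j < b" by simp
    show "chi (ff 1 j) + chi (ff 3 j) = (if y ! j = 0 then 2 else 0) + (if y ! j = 2 then -2 else (0::complex))"
      unfolding chi_ff1[OF j] chi_ff3[OF j] by (rule pj1[OF y_in[OF j]])
  qed
  moreover have "\<dots> = of_nat (card {j. j < b \<and> y ! j = 0}) * 2 + of_nat (card {j. j < b \<and> y ! j = 2}) * (-2)"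
    by (simp add: sum.distrib sum_if_card)
  ultimately have "of_nat (card {j. j < b \<and> y ! j = 0}) = (of_nat (card {j. j < b \<and> y ! j = 2}) :: complex)"
    by simp
  then show ?thesis by (simp only: of_nat_eq_iff)
qed

lemma eq_n1: "4 * card {j. j < b \<and> y ! j \<in> {1,3}} = 1 + a + 2 * b"
proof -
  have h1: "1 + (\<Sum>i<a. chi2 (ee i)) + (\<Sum>j<b. chi2 (ff 1 j) + chi2 (ff 3 j)) = 0"
    using S2 unfolding sum_E by (simp add: sum.distrib chi2_zero algebra_simps)
  have h2: "(\<Sum>i<a. chi2 (ee i)) = of_nat a" by (simp add: chi2_ee)
  have h3: "(\<Sum>j<b. chi2 (ff 1 j) + chi2 (ff 3 j)) =
     (\<Sum>j<b. 2 + (if y ! j \<in> {1,3} then -4 else (0::complex)))"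
  proof (intro sum.cong refl)
    fix j assume "j \<in> {..<b}" then have j: "j < b" by simp
    show "chi2 (ff 1 j) + chi2 (ff 3 j) = 2 + (if y ! j \<in> {1,3} then -4 else (0::complex))"
      unfolding chi2_def chi_ff1[OF j] chi_ff3[OF j] by (rule pj2[OF y_in[OF j]])
  qed
  have h4: "(\<Sum>j<b. 2 + (if y ! j \<in> {1,3} then -4 else (0::complex))) = 2 * of_nat b + of_nat (card {j. j < b \<and> y ! j \<in> {1,3}}) * (-4)"
    by (simp add: sum.distrib sum_if_card)
  have "of_nat (card {j. j < b \<and> y ! j \<in> {1,3}}) * 4 = (1 + of_nat a + 2 * of_nat b :: complex)"
    using h1 h2 h3 h4 by algebra
  then have "of_nat (4 * card {j. j < b \<and> y ! j \<in> {1,3}}) = (of_nat (1 + a + 2 * b) :: complex)"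
    by (simp add: algebra_simps)
  then show ?thesis by (simp only: of_nat_eq_iff)
qed

lemma eq_tot: "card {j. j < b \<and> y ! j = 0} + card {j. j < b \<and> y ! j \<in> {1,3}} + card {j. j < b \<and> y ! j = 2} = b"
proof -
  have "{..<b} = ({j. j < b \<and> y ! j = 0} \<union> {j. j < b \<and> y ! j \<in> {1,3}}) \<union> {j. j < b \<and> y ! j = 2}"
    using y_rng by auto
  then have "card {..<b} = card (({j. j < b \<and> y ! j = 0} \<union> {j. j < b \<and> y ! j \<in> {1,3}}) \<union> {j. j < b \<and> y ! j = 2})"
    by simp
  also have "\<dots> = card ({j. j < b \<and> y ! j = 0} \<union> {j. j < b \<and> y ! j \<in> {1,3}}) + card {j. j < b \<and> y ! j = 2}"
    by (rule card_Un_disjoint) auto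
  also have "card ({j. j < b \<and> y ! j = 0} \<union> {j. j < b \<and> y ! j \<in> {1,3}}) = card {j. j < b \<and> y ! j = 0} + card {j. j < b \<and> y ! j \<in> {1,3}}"
    by (rule card_Un_disjoint) auto
  finally show ?thesis by simp
qed

end


lemma arith_fin:
  fixes p n0 n1 n2 :: nat
  assumes p: "p \<ge> 1" and h1: "4 * n1 = 1 + (4*p - 1) + 2 * (2*p*(4*p - 1))"
    and h2: "n0 = n2" and h3: "n0 + n1 + n2 = 2*p*(4*p - 1)"
  shows "n1 = 4*p*p \<and> n0 = p*(2*p - 1)"
proof -
  obtain q where q: "p = q + 1" using p by (metis le_add_diff_inverse2)
  have e1: "4*p - 1 = 4*q + 3" "2*p - 1 = 2*q + 1" using q by auto
  have "4 * n1 = 4 * (4*p*p)" using h1 unfolding e1 q by (simp add: algebra_simps)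
  then have n1: "n1 = 4*p*p" by simp
  have "2 * n0 + 4*p*p = 2 * (p * (2*p - 1)) + 4*p*p"
    using h3 h2 n1 unfolding e1 q by (simp add: algebra_simps)
  then show ?thesis using n1 by simp
qed

theorem corollary3p6:
  fixes r :: nat and C D :: "(int list \<times> int list) set" and x y :: "int list"
  assumes "r \<ge> 2"
    and "Z2Z4_additive (2^r - 1) (2^(r-1) * (2^r - 1)) C"
    and "Z2Z4_perfect1 (2^r - 1) (2^(r-1) * (2^r - 1)) C"
    and "D = Z2Z4_dual (2^r - 1) (2^(r-1) * (2^r - 1)) C"
    and "Z2Z4_cyclic D"
    and "(x, y) \<in> D"
    and "z24_add (x, y) (x, y) \<noteq> z24_zero (2^r - 1) (2^(r-1) * (2^r - 1))"
  shows "card {j. j < length y \<and> y ! j \<in> {1, 3}} = 2^(2*r - 2)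
       \<and> card {j. j < length y \<and> y ! j = 2} = 2^(r-2) * (2^(r-1) - 1)
       \<and> card {j. j < length y \<and> y ! j = 0} = 2^(r-2) * (2^(r-1) - 1)"
proof -
  interpret code "2^r - 1" "2^(r-1) * (2^r - 1)" C x y
    using assms by unfold_locales auto
  obtain k where k: "r = k + 2" using assms(1) by (metis add.commute le_Suc_ex)
  define p :: nat where "p = 2^k"
  have p1: "p \<ge> 1" unfolding p_def by simp
  have e: "(2::nat)^r = 4*p" "(2::nat)^(r-1) = 2*p" "(2::nat)^(2*r-2) = 4*p*p" "(2::nat)^(r-2) = p"
    unfolding p_def k by (simp_all add: power_add power_mult_distrib power_mult[symmetric] mult_2 )
  have ly: "length y = 2^(r-1) * (2^r - 1)" using len_y .
  have h1: "4 * card {j. j < 2*p*(4*p - 1) \<and> y ! j \<in> {1,3}} = 1 + (4*p - 1) + 2 * (2*p*(4*p - 1))"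
    using eq_n1 unfolding e .
  have h2: "card {j. j < 2*p*(4*p - 1) \<and> y ! j = 0} = card {j. j < 2*p*(4*p - 1) \<and> y ! j = 2}"
    using eq_n0n2 unfolding e .
  have h3: "card {j. j < 2*p*(4*p - 1) \<and> y ! j = 0} + card {j. j < 2*p*(4*p - 1) \<and> y ! j \<in> {1,3}}
     + card {j. j < 2*p*(4*p - 1) \<and> y ! j = 2} = 2*p*(4*p - 1)"
    using eq_tot unfolding e .
  have A: "card {j. j < 2*p*(4*p - 1) \<and> y ! j \<in> {1,3}} = 4*p*p \<and> card {j. j < 2*p*(4*p - 1) \<and> y ! j = 0} = p*(2*p - 1)"
    by (rule arith_fin[OF p1 h1 h2]) (use h3 in simp)
  show ?thesis using A h2 unfolding ly e by simp
qed



end
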